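(* Let $(A,I)$ be a transversal prism and $m,n\ge0$. For $x\in W_m(A/I_n)$ with ghost coordinates $(w_0,\dots,w_m)$, the transversal coordinates $(t_0,\dots,t_{m+n})$ of $c(x)\in A/I_{m+n}$ are \[ c(x)=(\underbrace{w_m,\dots,w_m}_{n+1\text{ times}},\phi(w_{m-1}),\phi^2(w_{m-2}),\dots,\phi^m(w_0)), \] i.e.\ $t_j$ is the image of $w_m$ in $A/\phi^j(I)$ for $0\le j\le n$, and $t_{n+k}$ is the image of $\phi^k(w_{m-k})$ in $A/\phi^{n+k}(I)$ for $1\le k\le m$.
   Context: A prism $(A,I)$: a $\delta$-ring $A$ (with Frobenius lift $\phi(x)=x^p+p\delta(x)$), ideal $I$ defining a Cartier divisor, $A$ derived $(p,I)$-complete, $p\in I+\phi(I)A$; transversal means $A/I$ is $p$-torsionfree. $I_n=I\phi(I)\cdots\phi^n(I)A$. For transversal prisms the map $A/I_n\to\prod_{i=0}^nA/\phi^i(I)A$ is injective; its components $(t_0,\dots,t_n)$ are the transversal coordinates. The $C_{p^\infty}$-Tambara functor $\underline A$ has value $A/I_n$ at $C_{p^n}$ and structure maps given in transversal coordinates by $F(t_0,\dots,t_n)=(t_0,\dots,t_{n-1})$, $V(t_0,\dots,t_{n-1})=(pt_0,\dots,pt_{n-1},0)$, $N(t_0,\dots,t_{n-1})=(t_0^p,\dots,t_{n-1}^p,\phi(t_{n-1}))$; $V^k_j,N^k_j$ are composites from level $j$ to $k$. $W_m(R)$ denotes $p$-typical Witt vectors with Witt coordinates $(a_0,\dots,a_m)$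 and ghost coordinates $w_i=\sum_{k=0}^ip^ka_k^{p^{i-k}}$. The comparison map $c\colon W_m(A/I_n)\to A/I_{m+n}$ is $c(a_0,\dots,a_m)=\sum_{i=0}^mV^{m+n}_{m+n-i}N^{m+n-i}_n(a_i)$. *)

theory Defs
  imports Main "HOL-Computational_Algebra.Primes"
begin

definition is_ideal :: "'a::comm_ring_1 set \<Rightarrow> bool" where
  "is_ideal J \<longleftrightarrow> 0 \<in> J \<and> (\<forall>x\<in>J. \<forall>y\<in>J. x + y \<in> J) \<and> (\<forall>r. \<forall>x\<in>J. r * x \<in> J)"

definition ideal_gen :: "'a::comm_ring_1 set \<Rightarrow> 'a set" where
  "ideal_gen S = \<Inter>{J. is_ideal J \<and> S \<subseteq> J}"

definition phi :: "nat \<Rightarrow> ('a::comm_ring_1 \<Rightarrow> 'a) \<Rightarrow> 'a \<Rightarrow> 'a" where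
  "phi p \<delta> x = x ^ p + of_nat p * \<delta> x"

definition delta_ring :: "nat \<Rightarrow> ('a::comm_ring_1 \<Rightarrow> 'a) \<Rightarrow> bool" where
  "delta_ring p \<delta> \<longleftrightarrow> prime p \<and> \<delta> 0 = 0 \<and> \<delta> 1 = 0 \<and>
     (\<forall>x y. \<delta> (x * y) = x ^ p * \<delta> y + y ^ p * \<delta> x + of_nat p * \<delta> x * \<delta> y) \<and>
     (\<forall>x y. \<delta> (x + y) = \<delta> x + \<delta> y
              - (\<Sum>i\<in>{1..<p}. of_nat ((p choose i) div p) * x ^ i * y ^ (p - i)))"

text \<open>Derived completeness of A with respect to a single element f:
  R Hom(A_f, A) = 0, i.e. the map (x_k) \<mapsto> (x_k - f x_(k+1)) on A^N is bijective.\<close>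
definition derived_complete_elt :: "'a::comm_ring_1 \<Rightarrow> bool" where
  "derived_complete_elt f \<longleftrightarrow> (\<forall>y :: nat \<Rightarrow> 'a. \<exists>!x :: nat \<Rightarrow> 'a. \<forall>k. x k - f * x (Suc k) = y k)"

definition derived_complete :: "'a::comm_ring_1 set \<Rightarrow> bool" where
  "derived_complete J \<longleftrightarrow> (\<forall>f\<in>J. derived_complete_elt f)"

text \<open>I defines a Cartier divisor: I is locally (on a finite cover of Spec A by
  basic opens D(g)) generated by a nonzerodivisor.\<close>
definition cartier_divisor :: "'a::comm_ring_1 set \<Rightarrow> bool" where
  "cartier_divisor I \<longleftrightarrow> is_ideal I \<and>
     (\<exists>F. finite F \<and> ideal_gen F = UNIV \<and>
        (\<forall>g\<in>F. \<exists>d\<in>I.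
            (\<forall>b. (\<exists>k. g ^ k * d * b = 0) \<longrightarrow> (\<exists>k. g ^ k * b = 0)) \<and>
            (\<forall>x\<in>I. \<exists>b k. g ^ k * x = d * b)))"

definition phiI :: "nat \<Rightarrow> ('a::comm_ring_1 \<Rightarrow> 'a) \<Rightarrow> 'a set \<Rightarrow> nat \<Rightarrow> 'a set" where
  "phiI p \<delta> I i = ideal_gen ((phi p \<delta> ^^ i) ` I)"

definition In :: "nat \<Rightarrow> ('a::comm_ring_1 \<Rightarrow> 'a) \<Rightarrow> 'a set \<Rightarrow> nat \<Rightarrow> 'a set" where
  "In p \<delta> I n = ideal_gen {\<Prod>i\<le>n. (phi p \<delta> ^^ i) (x i) | x. \<forall>i\<le>n. x i \<in> I}"

definition prism :: "nat \<Rightarrow> ('a::comm_ring_1 \<Rightarrow> 'a) \<Rightarrow> 'a set \<Rightarrow> bool" where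
  "prism p \<delta> I \<longleftrightarrow> delta_ring p \<delta> \<and> is_ideal I \<and> cartier_divisor I \<and>
     derived_complete (ideal_gen (insert (of_nat p) I)) \<and>
     (\<exists>x\<in>I. \<exists>y\<in>phiI p \<delta> I 1. of_nat p = x + y)"

definition transversal_prism :: "nat \<Rightarrow> ('a::comm_ring_1 \<Rightarrow> 'a) \<Rightarrow> 'a set \<Rightarrow> bool" where
  "transversal_prism p \<delta> I \<longleftrightarrow> prism p \<delta> I \<and> (\<forall>a. of_nat p * a \<in> I \<longrightarrow> a \<in> I)"

text \<open>Elements of A/I_n are represented by elements of A. The transversal coordinates
  of (the class of) y in A/I_n are the images of y in A/phi^i(I)A, i \<le> n.
  V and N are the maps given in transversal coordinates; since the transversal-coordinate
  map is injective, they are determined by these coordinates.\<close>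

definition Vstep :: "nat \<Rightarrow> ('a::comm_ring_1 \<Rightarrow> 'a) \<Rightarrow> 'a set \<Rightarrow> nat \<Rightarrow> 'a \<Rightarrow> 'a" where
  "Vstep p \<delta> I n a = (SOME y. (\<forall>i\<le>n. y - of_nat p * a \<in> phiI p \<delta> I i) \<and> y \<in> phiI p \<delta> I (Suc n))"

definition Nstep :: "nat \<Rightarrow> ('a::comm_ring_1 \<Rightarrow> 'a) \<Rightarrow> 'a set \<Rightarrow> nat \<Rightarrow> 'a \<Rightarrow> 'a" where
  "Nstep p \<delta> I n a = (SOME y. (\<forall>i\<le>n. y - a ^ p \<in> phiI p \<delta> I i) \<and> y - phi p \<delta> a \<in> phiI p \<delta> I (Suc n))"

text \<open>Vcomp j d = V^(j+d)_j and Ncomp j d = N^(j+d)_j (composites from level j to level j+d).\<close>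
fun Vcomp :: "nat \<Rightarrow> ('a::comm_ring_1 \<Rightarrow> 'a) \<Rightarrow> 'a set \<Rightarrow> nat \<Rightarrow> nat \<Rightarrow> 'a \<Rightarrow> 'a" where
  "Vcomp p \<delta> I j 0 a = a"
| "Vcomp p \<delta> I j (Suc d) a = Vstep p \<delta> I (j + d) (Vcomp p \<delta> I j d a)"

fun Ncomp :: "nat \<Rightarrow> ('a::comm_ring_1 \<Rightarrow> 'a) \<Rightarrow> 'a set \<Rightarrow> nat \<Rightarrow> nat \<Rightarrow> 'a \<Rightarrow> 'a" where
  "Ncomp p \<delta> I j 0 a = a"
| "Ncomp p \<delta> I j (Suc d) a = Nstep p \<delta> I (j + d) (Ncomp p \<delta> I j d a)"

definition ghost :: "nat \<Rightarrow> (nat \<Rightarrow> 'a::comm_ring_1) \<Rightarrow> nat \<Rightarrow> 'a" where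
  "ghost p a i = (\<Sum>k\<le>i. of_nat p ^ k * a k ^ (p ^ (i - k)))"

definition cmap :: "nat \<Rightarrow> ('a::comm_ring_1 \<Rightarrow> 'a) \<Rightarrow> 'a set \<Rightarrow> nat \<Rightarrow> nat \<Rightarrow> (nat \<Rightarrow> 'a) \<Rightarrow> 'a" where
  "cmap p \<delta> I m n a = (\<Sum>i\<le>m. Vcomp p \<delta> I (m + n - i) i (Ncomp p \<delta> I n (m - i) (a i)))"

end

theory Submission
  imports Defs
begin


lemma ideal_gen_ideal: "is_ideal (ideal_gen S)"
  unfolding is_ideal_def ideal_gen_def by auto

lemma ideal_gen_sub: "S \<subseteq> ideal_gen S"
  unfolding ideal_gen_def by auto

lemma ideal_gen_least: "is_ideal J \<Longrightarrow> S \<subseteq> J \<Longrightarrow> ideal_gen S \<subseteq> J"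
  unfolding ideal_gen_def by auto

lemma id_zero: "is_ideal J \<Longrightarrow> 0 \<in> J" by (simp add: is_ideal_def)
lemma id_add: "is_ideal J \<Longrightarrow> x \<in> J \<Longrightarrow> y \<in> J \<Longrightarrow> x + y \<in> J" by (simp add: is_ideal_def)
lemma id_mult: "is_ideal J \<Longrightarrow> x \<in> J \<Longrightarrow> r * x \<in> J" by (simp add: is_ideal_def)
lemma id_mult2: "is_ideal J \<Longrightarrow> x \<in> J \<Longrightarrow> x * r \<in> J" by (metis id_mult mult.commute)
lemma id_neg: "is_ideal J \<Longrightarrow> x \<in> J \<Longrightarrow> - x \<in> J"
  using id_mult[of J x "-1"] by simp
lemma id_diff: "is_ideal J \<Longrightarrow> x \<in> J \<Longrightarrow> y \<in> J \<Longrightarrow> x - y \<in> J"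
  using id_add[of J x "-y"] id_neg[of J y] by simp
lemma id_sum: "is_ideal J \<Longrightarrow> (\<And>i. i \<in> A \<Longrightarrow> f i \<in> J) \<Longrightarrow> sum f A \<in> J"
  by (induction A rule: infinite_finite_induct) (auto simp: id_zero id_add)
lemma id_pow: "is_ideal J \<Longrightarrow> x \<in> J \<Longrightarrow> n \<noteq> 0 \<Longrightarrow> x ^ n \<in> J"
  by (cases n) (auto intro: id_mult2)
lemma pow_diff_mem: "is_ideal J \<Longrightarrow> a - b \<in> J \<Longrightarrow> a ^ n - b ^ n \<in> J"
proof (induction n)
  case 0 then show ?case by (simp add: id_zero)
next
  case (Suc n)
  have "a ^ Suc n - b ^ Suc n = a * (a ^ n - b ^ n) + (a - b) * b ^ n"
    by (simp add: algebra_simps)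
  then show ?case using Suc by (simp add: id_add id_mult id_mult2)
qed
lemma mult_diff_mem: "is_ideal J \<Longrightarrow> a - b \<in> J \<Longrightarrow> c * a - c * b \<in> J"
  using id_mult[of J "a - b" c] by (simp add: algebra_simps)
lemma sum_diff_mem: "is_ideal J \<Longrightarrow> (\<And>i. i \<in> A \<Longrightarrow> f i - g i \<in> J) \<Longrightarrow> sum f A - sum g A \<in> J"
  using id_sum[of J A "\<lambda>i. f i - g i"] by (simp add: sum_subtractf)

definition rhom :: "('a::comm_ring_1 \<Rightarrow> 'a) \<Rightarrow> bool" where
  "rhom f \<longleftrightarrow> (\<forall>x y. f (x + y) = f x + f y) \<and> (\<forall>x y. f (x * y) = f x * f y) \<and> f 1 = 1"

lemma rhom_add: "rhom f \<Longrightarrow> f (x + y) = f x + f y" by (simp add: rhom_def)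
lemma rhom_mult: "rhom f \<Longrightarrow> f (x * y) = f x * f y" by (simp add: rhom_def)
lemma rhom_one: "rhom f \<Longrightarrow> f 1 = 1" by (simp add: rhom_def)
lemma rhom_zero: "rhom f \<Longrightarrow> f 0 = 0"
  using rhom_add[of f 0 0] by simp
lemma rhom_neg: "rhom f \<Longrightarrow> f (- x) = - f x"
  using rhom_add[of f x "-x"] rhom_zero[of f] minus_unique[of "f x" "f (-x)"] by simp
lemma rhom_diff: "rhom f \<Longrightarrow> f (x - y) = f x - f y"
  using rhom_add[of f x "-y"] rhom_neg[of f y] by simp
lemma rhom_of_nat: "rhom f \<Longrightarrow> f (of_nat n) = of_nat n"
  by (induction n) (auto simp: rhom_zero rhom_add rhom_one)
lemma rhom_pow: "rhom f \<Longrightarrow> f (x ^ n) = f x ^ n"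
  by (induction n) (auto simp: rhom_one rhom_mult)
lemma rhom_sum: "rhom f \<Longrightarrow> f (sum g A) = (\<Sum>i\<in>A. f (g i))"
  by (induction A rule: infinite_finite_induct) (auto simp: rhom_zero rhom_add)
lemma rhom_comp: "rhom f \<Longrightarrow> rhom g \<Longrightarrow> rhom (f \<circ> g)"
  by (simp add: rhom_def)
lemma rhom_funpow: "rhom f \<Longrightarrow> rhom (f ^^ k)"
  by (induction k) (auto simp: rhom_def)
lemma rhom_unit: "rhom f \<Longrightarrow> a * b = 1 \<Longrightarrow> f a * f b = 1"
  by (metis rhom_mult rhom_one)

lemma rhom_ideal_gen: assumes "rhom f" "x \<in> ideal_gen S" shows "f x \<in> ideal_gen (f ` S)"
proof -
  have "is_ideal {x. f x \<in> ideal_gen (f ` S)}"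
    using assms(1) ideal_gen_ideal[of "f ` S"]
    by (auto simp: is_ideal_def rhom_zero rhom_add rhom_mult)
  moreover have "S \<subseteq> {x. f x \<in> ideal_gen (f ` S)}" using ideal_gen_sub by blast
  ultimately show ?thesis using ideal_gen_least assms(2) by blast
qed

lemma phi_rhom: assumes "delta_ring p \<delta>" shows "rhom (phi p \<delta>)"
proof -
  have pr: "prime p" and d0: "\<delta> 0 = 0" and d1: "\<delta> 1 = 0"
    and dm: "\<And>x y. \<delta> (x * y) = x ^ p * \<delta> y + y ^ p * \<delta> x + of_nat p * \<delta> x * \<delta> y"
    and da: "\<And>x y. \<delta> (x + y) = \<delta> x + \<delta> y
              - (\<Sum>i\<in>{1..<p}. of_nat ((p choose i) div p) * x ^ i * y ^ (p - i))"
    using assms by (auto simp: delta_ring_def)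
  have p0: "p \<noteq> 0" using pr by auto
  have add: "phi p \<delta> (x + y) = phi p \<delta> x + phi p \<delta> y" for x y :: 'a
  proof -
    have c: "of_nat p * (of_nat ((p choose i) div p) :: 'a) = of_nat (p choose i)" if "i \<in> {1..<p}" for i
    proof -
      have "p dvd (p choose i)" using that p0 pr by (intro dvd_choose_prime) auto
      then have "p * ((p choose i) div p) = p choose i" by simp
      then show ?thesis by (metis of_nat_mult)
    qed
    have "(x + y) ^ p = (\<Sum>i\<le>p. of_nat (p choose i) * x ^ i * y ^ (p - i))"
      by (rule binomial_ring)
    also have "{..p} = insert 0 (insert p {1..<p})" using p0 by auto
    also have "(\<Sum>i\<in>insert 0 (insert p {1..<p}). of_nat (p choose i) * x ^ i * y ^ (p - i))
       = y ^ p + x ^ p + (\<Sum>i\<in>{1..<p}. of_nat (p choose i) * x ^ i * y ^ (p - i))"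
      using p0 by simp
    also have "(\<Sum>i\<in>{1..<p}. of_nat (p choose i) * x ^ i * y ^ (p - i))
       = of_nat p * (\<Sum>i\<in>{1..<p}. of_nat ((p choose i) div p) * x ^ i * y ^ (p - i))"
      unfolding sum_distrib_left
    proof (rule sum.cong[OF refl])
      fix i assume "i \<in> {1..<p}"
      then show "of_nat (p choose i) * x ^ i * y ^ (p - i) =
          of_nat p * (of_nat ((p choose i) div p) * x ^ i * y ^ (p - i))"
        using c[of i] by (metis mult.assoc)
    qed
    finally show ?thesis unfolding phi_def da by (simp add: algebra_simps)
  qed
  have mult: "phi p \<delta> (x * y) = phi p \<delta> x * phi p \<delta> y" for x y :: 'a
    unfolding phi_def dm by (simp add: algebra_simps power_mult_distrib)
  have one: "phi p \<delta> 1 = 1" unfolding phi_def d1 by simp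
  show ?thesis using add mult one by (simp add: rhom_def)
qed



lemma unit_of_J: assumes "derived_complete J" "is_ideal J" "j \<in> J" shows "\<exists>u. (1 + j) * u = 1"
proof -
  have "-j \<in> J" using assms id_neg by blast
  then have "derived_complete_elt (-j)" using assms(1) by (simp add: derived_complete_def)
  then have "\<exists>!x :: nat \<Rightarrow> 'a. \<forall>k. x k - (-j) * x (Suc k) = 1"
    unfolding derived_complete_elt_def by (rule allE[where x="\<lambda>_. 1"]) simp
  then obtain x where x: "\<forall>k. x k - (-j) * x (Suc k) = 1"
    and uq: "\<And>y. \<forall>k. y k - (-j) * y (Suc k) = 1 \<Longrightarrow> y = x" by (elim ex1E) blast
  have "(\<lambda>k. x (Suc k)) = x" using x by (intro uq) auto
  then have "x (Suc 0) = x 0" by (rule fun_cong)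
  then show ?thesis using x[rule_format, of 0] by (intro exI[of _ "x 0"]) (simp add: algebra_simps)
qed

lemma ideal_colon: "is_ideal K \<Longrightarrow> is_ideal {f. f * v \<in> K}"
  unfolding is_ideal_def by (simp add: distrib_right mult.assoc)

lemma In_step:
  assumes "z \<in> I" "f \<in> In p \<delta> I k"
  shows "f * (phi p \<delta> ^^ Suc k) z \<in> In p \<delta> I (Suc k)"
proof -
  let ?v = "(phi p \<delta> ^^ Suc k) z"
  have "is_ideal {f. f * ?v \<in> In p \<delta> I (Suc k)}"
    unfolding In_def by (intro ideal_colon ideal_gen_ideal)
  moreover have "{\<Prod>i\<le>k. (phi p \<delta> ^^ i) (x i) | x. \<forall>i\<le>k. x i \<in> I} \<subseteq> {f. f * ?v \<in> In p \<delta> I (Suc k)}"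
  proof
    fix f assume "f \<in> {\<Prod>i\<le>k. (phi p \<delta> ^^ i) (x i) | x. \<forall>i\<le>k. x i \<in> I}"
    then obtain x where x: "\<forall>i\<le>k. x i \<in> I" and f: "f = (\<Prod>i\<le>k. (phi p \<delta> ^^ i) (x i))" by blast
    define x' where "x' = x(Suc k := z)"
    have "(\<Prod>i\<le>k. (phi p \<delta> ^^ i) (x' i)) = f" unfolding f x'_def by (intro prod.cong) auto
    then have "f * ?v = (\<Prod>i\<le>Suc k. (phi p \<delta> ^^ i) (x' i))"
      by (simp only: prod.atMost_Suc) (simp add: x'_def)
    moreover have "\<forall>i\<le>Suc k. x' i \<in> I" using x assms(1) by (auto simp: x'_def le_Suc_eq)
    ultimately have "f * ?v \<in> {\<Prod>i\<le>Suc k. (phi p \<delta> ^^ i) (x i) | x. \<forall>i\<le>Suc k. x i \<in> I}"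
      by (intro CollectI exI[of _ x'] conjI)
    then have "f * ?v \<in> In p \<delta> I (Suc k)" unfolding In_def by (rule subsetD[OF ideal_gen_sub])
    then show "f \<in> {f. f * ?v \<in> In p \<delta> I (Suc k)}" by simp
  qed
  ultimately have "In p \<delta> I k \<subseteq> {f. f * ?v \<in> In p \<delta> I (Suc k)}"
    unfolding In_def[of p \<delta> I k] by (rule ideal_gen_least)
  then show ?thesis using assms(2) by blast
qed

lemma In_sub_phiI:
  assumes "i \<le> n" shows "In p \<delta> I n \<subseteq> phiI p \<delta> I i"
  unfolding In_def phiI_def
proof (rule ideal_gen_least[OF ideal_gen_ideal], rule subsetI)
  fix f assume "f \<in> {\<Prod>i\<le>n. (phi p \<delta> ^^ i) (x i) | x. \<forall>i\<le>n. x i \<in> I}"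
  then obtain x where x: "\<forall>i\<le>n. x i \<in> I" and f: "f = (\<Prod>i\<le>n. (phi p \<delta> ^^ i) (x i))" by blast
  have "f = (phi p \<delta> ^^ i) (x i) * (\<Prod>j\<in>{..n} - {i}. (phi p \<delta> ^^ j) (x j))"
    unfolding f using assms by (simp add: prod.remove)
  moreover have "(phi p \<delta> ^^ i) (x i) \<in> phiI p \<delta> I i"
    unfolding phiI_def using x assms ideal_gen_sub by blast
  ultimately show "f \<in> ideal_gen ((phi p \<delta> ^^ i) ` I)"
    unfolding phiI_def by (metis id_mult2 ideal_gen_ideal)
qed



lemma ideal_plus_mult: assumes "is_ideal X" shows "is_ideal {v. \<exists>g\<in>X. \<exists>c. v = g + q * c}"
  unfolding is_ideal_def
proof (intro conjI ballI allI)
  show "0 \<in> {v. \<exists>g\<in>X. \<exists>c. v = g + q * c}"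
    using id_zero[OF assms] by (intro CollectI bexI[of _ 0] exI[of _ 0]) simp_all
next
  fix u v assume "u \<in> {v. \<exists>g\<in>X. \<exists>c. v = g + q * c}" "v \<in> {v. \<exists>g\<in>X. \<exists>c. v = g + q * c}"
  then obtain g1 c1 g2 c2 where "g1 \<in> X" "g2 \<in> X" "u = g1 + q * c1" "v = g2 + q * c2" by auto
  then show "u + v \<in> {v. \<exists>g\<in>X. \<exists>c. v = g + q * c}"
    using id_add[OF assms] by (intro CollectI bexI[of _ "g1 + g2"] exI[of _ "c1 + c2"]) (simp_all add: algebra_simps)
next
  fix r v assume "v \<in> {v. \<exists>g\<in>X. \<exists>c. v = g + q * c}"
  then obtain g1 c1 where "g1 \<in> X" "v = g1 + q * c1" by auto
  then show "r * v \<in> {v. \<exists>g\<in>X. \<exists>c. v = g + q * c}"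
    using id_mult[OF assms] by (intro CollectI bexI[of _ "r * g1"] exI[of _ "r * c1"]) (simp_all add: algebra_simps)
qed

lemma ideal_mod: assumes "is_ideal X" "is_ideal K" shows "is_ideal {v. \<exists>f\<in>X. v - f \<in> K}"
  unfolding is_ideal_def
proof (intro conjI ballI allI)
  show "0 \<in> {v. \<exists>f\<in>X. v - f \<in> K}"
    using id_zero[OF assms(1)] id_zero[OF assms(2)] by (intro CollectI bexI[of _ 0]) simp_all
next
  fix u v assume "u \<in> {v. \<exists>f\<in>X. v - f \<in> K}" "v \<in> {v. \<exists>f\<in>X. v - f \<in> K}"
  then obtain f1 f2 where "f1 \<in> X" "f2 \<in> X" "u - f1 \<in> K" "v - f2 \<in> K" by auto
  moreover have "u + v - (f1 + f2) \<in> K"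
  proof -
    have "(u - f1) + (v - f2) \<in> K" using calculation id_add[OF assms(2)] by blast
    then show ?thesis by (simp add: algebra_simps)
  qed
  ultimately show "u + v \<in> {v. \<exists>f\<in>X. v - f \<in> K}"
    using id_add[OF assms(1)] by (intro CollectI bexI[of _ "f1 + f2"]) simp_all
next
  fix r v assume "v \<in> {v. \<exists>f\<in>X. v - f \<in> K}"
  then obtain f1 where "f1 \<in> X" "v - f1 \<in> K" by auto
  moreover have "r * v - r * f1 \<in> K" using mult_diff_mem[OF assms(2) calculation(2)] .
  ultimately show "r * v \<in> {v. \<exists>f\<in>X. v - f \<in> K}"
    using id_mult[OF assms(1)] id_mult[OF assms(2)] by (intro CollectI bexI[of _ "r * f1"]) simp_all
qed


lemma key_e:
  assumes tp: "transversal_prism p \<delta> I"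
  shows "\<exists>e. e \<in> phiI p \<delta> I (Suc n) \<and> (\<forall>i\<le>n. e - of_nat p \<in> phiI p \<delta> I i)"
proof -
  have dr: "delta_ring p \<delta>" and pI: "is_ideal I"
    and dc: "derived_complete (ideal_gen (insert (of_nat p) I))"
    and ax: "\<exists>x\<in>I. \<exists>y\<in>phiI p \<delta> I 1. of_nat p = x + y"
    and tr: "\<And>a. of_nat p * a \<in> I \<Longrightarrow> a \<in> I"
    using tp unfolding transversal_prism_def prism_def by simp_all
  have pr: "prime p" using dr by (simp add: delta_ring_def)
  then have p2: "p \<ge> 2" by (simp add: prime_ge_2_nat)
  have rh: "rhom (phi p \<delta>)" by (rule phi_rhom[OF dr])
  define J where "J = ideal_gen (insert (of_nat p) I)"
  have Jid: "is_ideal J" unfolding J_def by (rule ideal_gen_ideal)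
  have pJ: "of_nat p \<in> J" unfolding J_def using ideal_gen_sub by blast
  have IJ: "I \<subseteq> J" unfolding J_def using ideal_gen_sub by blast
  have unit: "\<exists>u. (1 + j) * u = 1" if "j \<in> J" for j
    using unit_of_J[OF _ Jid that] dc unfolding J_def by blast
  define K where "K = phiI p \<delta> I (Suc n)"
  have Kid: "is_ideal K" unfolding K_def phiI_def by (rule ideal_gen_ideal)
  define G where "G k = ideal_gen ((\<lambda>z. ((phi p \<delta> ^^ k) z) ^ p) ` I)" for k
  have Gid: "is_ideal (G k)" for k unfolding G_def by (rule ideal_gen_ideal)
  have Ggen: "((phi p \<delta> ^^ k) z) ^ p \<in> G k" if "z \<in> I" for k z
    unfolding G_def by (rule subsetD[OF ideal_gen_sub], rule image_eqI[OF refl that])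
  have Fsuc: "(phi p \<delta> ^^ Suc k) z = ((phi p \<delta> ^^ k) z) ^ p + of_nat p * \<delta> ((phi p \<delta> ^^ k) z)" for k z
    by (simp only: funpow.simps(2) comp_apply phi_def)
  have pSuc: "p = Suc (p - 1)" using p2 by simp
  obtain x y where x: "x \<in> I" and y: "y \<in> phiI p \<delta> I 1" and pxy: "of_nat p = x + y"
    using ax by blast
  define P where "P = ideal_gen ((\<lambda>z. z ^ p) ` I)"
  have Pid: "is_ideal P" unfolding P_def by (rule ideal_gen_ideal)
  define S where "S = {v. \<exists>g\<in>P. \<exists>c. v = g + of_nat p * c}"
  have Sid: "is_ideal S" unfolding S_def by (rule ideal_plus_mult[OF Pid])
  have "phiI p \<delta> I 1 \<subseteq> S"
    unfolding phiI_def
  proof (rule ideal_gen_least[OF Sid], rule subsetI)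
    fix v assume "v \<in> (phi p \<delta> ^^ 1) ` I"
    then obtain z where z: "z \<in> I" and v: "v = phi p \<delta> z" by auto
    have "z ^ p \<in> P" unfolding P_def by (rule subsetD[OF ideal_gen_sub], rule image_eqI[OF refl z])
    then show "v \<in> S" unfolding S_def v phi_def by (intro CollectI bexI[of _ "z ^ p"] exI[of _ "\<delta> z"]) simp_all
  qed
  then have "y \<in> S" using y by (rule subsetD)
  then obtain a b where a: "a \<in> P" and yab: "y = a + of_nat p * b"
    unfolding S_def by auto
  have PI: "P \<subseteq> I" unfolding P_def
    by (rule ideal_gen_least[OF pI]) (use id_pow[OF pI] p2 in auto)
  have "of_nat p * (1 - b) = x + a" using pxy yab by (simp add: algebra_simps)
  then have "of_nat p * (1 - b) \<in> I" using x a PI id_add[OF pI] by auto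
  then have "1 - b \<in> I" by (rule tr)
  then have "- (1 - b) \<in> J" using IJ id_neg[OF Jid] by blast
  then obtain b' where "(1 + - (1 - b)) * b' = 1" using unit by blast
  then have bb': "b * b' = 1" by simp
  have peq: "of_nat p = b' * (y - a)"
  proof -
    have "b' * (y - a) = of_nat p * (b * b')" using yab by (simp add: algebra_simps)
    then show ?thesis using bb' by simp
  qed
  have rhn: "rhom (phi p \<delta> ^^ n)" by (rule rhom_funpow[OF rh])
  have "(phi p \<delta> ^^ n) y \<in> ideal_gen ((phi p \<delta> ^^ n) ` ((phi p \<delta> ^^ 1) ` I))"
    using rhom_ideal_gen[OF rhn] y unfolding phiI_def by blast
  moreover have "(phi p \<delta> ^^ n) ` ((phi p \<delta> ^^ 1) ` I) = (phi p \<delta> ^^ Suc n) ` I"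
    by (metis Suc_eq_plus1 funpow_add image_comp)
  ultimately have FyK: "(phi p \<delta> ^^ n) y \<in> K" unfolding K_def phiI_def by simp
  have "(phi p \<delta> ^^ n) a \<in> ideal_gen ((phi p \<delta> ^^ n) ` ((\<lambda>z. z ^ p) ` I))"
    using rhom_ideal_gen[OF rhn] a unfolding P_def by blast
  moreover have "(phi p \<delta> ^^ n) ` ((\<lambda>z. z ^ p) ` I) = (\<lambda>z. ((phi p \<delta> ^^ n) z) ^ p) ` I"
    by (simp add: image_comp comp_def rhom_pow[OF rhn])
  ultimately have FaG: "(phi p \<delta> ^^ n) a \<in> G n" unfolding G_def by simp
  have D0: "\<exists>g\<in>G n. of_nat p - g \<in> K"
  proof (intro bexI)
    have "of_nat p = (phi p \<delta> ^^ n) (of_nat p)" by (simp add: rhom_of_nat[OF rhn])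
    also have "\<dots> = (phi p \<delta> ^^ n) b' * ((phi p \<delta> ^^ n) y - (phi p \<delta> ^^ n) a)"
      by (subst peq) (simp add: rhom_mult[OF rhn] rhom_diff[OF rhn])
    finally have "of_nat p - (- ((phi p \<delta> ^^ n) b' * (phi p \<delta> ^^ n) a)) = (phi p \<delta> ^^ n) b' * (phi p \<delta> ^^ n) y"
      by (simp add: algebra_simps)
    then show "of_nat p - (- ((phi p \<delta> ^^ n) b' * (phi p \<delta> ^^ n) a)) \<in> K"
      using id_mult[OF Kid FyK] by simp
    show "- ((phi p \<delta> ^^ n) b' * (phi p \<delta> ^^ n) a) \<in> G n"
      using id_neg[OF Gid] id_mult[OF Gid FaG] by blast
  qed
  have Dt: "t \<le> n \<Longrightarrow> \<exists>g\<in>G (n - t). of_nat p - g \<in> K" for t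
  proof (induction t)
    case 0 then show ?case using D0 by simp
  next
    case (Suc t)
    define k where "k = n - Suc t"
    have nt: "n - t = Suc k" using Suc.prems unfolding k_def by simp
    obtain g where g: "g \<in> G (Suc k)" and pg: "of_nat p - g \<in> K"
      using Suc by (auto simp: nt)
    define T where "T = {v. \<exists>g\<in>G k. \<exists>c. v = g + of_nat p ^ p * c}"
    have Tid: "is_ideal T" unfolding T_def by (rule ideal_plus_mult[OF Gid])
    have "G (Suc k) \<subseteq> T" unfolding G_def[of "Suc k"]
    proof (rule ideal_gen_least[OF Tid], rule subsetI)
      fix v assume "v \<in> (\<lambda>z. ((phi p \<delta> ^^ Suc k) z) ^ p) ` I"
      then obtain z where z: "z \<in> I" and v: "v = ((phi p \<delta> ^^ Suc k) z) ^ p" by auto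
      define w where "w = (phi p \<delta> ^^ k) z"
      have v2: "v = (w ^ p + of_nat p * \<delta> w) ^ p" unfolding v w_def Fsuc ..
      have "(w ^ p + of_nat p * \<delta> w) - of_nat p * \<delta> w \<in> G k" using Ggen[OF z] unfolding w_def by simp
      then have "(w ^ p + of_nat p * \<delta> w) ^ p - (of_nat p * \<delta> w) ^ p \<in> G k"
        by (rule pow_diff_mem[OF Gid])
      moreover have "v = ((w ^ p + of_nat p * \<delta> w) ^ p - (of_nat p * \<delta> w) ^ p) + of_nat p ^ p * (\<delta> w ^ p)"
        unfolding v2 by (simp add: power_mult_distrib)
      ultimately show "v \<in> T" unfolding T_def by blast
    qed
    then obtain g' c where g': "g' \<in> G k" and gg: "g = g' + of_nat p ^ p * c" using g unfolding T_def by blast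
    have "of_nat p ^ (p - 1) \<in> J" using id_pow[OF Jid pJ] p2 by simp
    then have "- (of_nat p ^ (p - 1) * c) \<in> J" using id_neg[OF Jid] id_mult2[OF Jid] by blast
    then obtain u where "(1 + - (of_nat p ^ (p - 1) * c)) * u = 1" using unit by blast
    then have u: "(1 - of_nat p ^ (p - 1) * c) * u = 1" by simp
    have pp: "(of_nat p :: 'a) ^ p = of_nat p * of_nat p ^ (p - 1)" by (subst pSuc) simp
    have "of_nat p - u * g' = u * (of_nat p - g)"
    proof -
      have "u * (of_nat p - g) = u * (of_nat p * (1 - of_nat p ^ (p - 1) * c)) - u * g'"
        unfolding gg pp by (simp add: algebra_simps)
      also have "u * (of_nat p * (1 - of_nat p ^ (p - 1) * c)) = of_nat p"
        using u by (metis mult.commute mult.left_commute mult_1_right)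
      then have "u * (of_nat p * (1 - of_nat p ^ (p - 1) * c)) - u * g' = of_nat p - u * g'" by simp
      finally show ?thesis by simp
    qed
    then have "of_nat p - u * g' \<in> K" using id_mult[OF Kid pg] by simp
    moreover have "u * g' \<in> G k" using id_mult[OF Gid g'] .
    ultimately show ?case unfolding k_def by blast
  qed
  have D: "\<exists>g\<in>G k. of_nat p - g \<in> K" if "k \<le> n" for k
    using Dt[of "n - k"] that by simp
  have E: "k \<le> n \<Longrightarrow> G k \<subseteq> {v. \<exists>f\<in>In p \<delta> I k. v - f \<in> K}" for k
  proof (induction k)
    case 0
    have Tid: "is_ideal {v. \<exists>f\<in>In p \<delta> I 0. v - f \<in> K}"
      by (rule ideal_mod[OF _ Kid]) (unfold In_def, rule ideal_gen_ideal)
    show ?case unfolding G_def[of 0]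
    proof (rule ideal_gen_least[OF Tid], rule subsetI)
      fix v assume "v \<in> (\<lambda>z. ((phi p \<delta> ^^ 0) z) ^ p) ` I"
      then obtain z where z: "z \<in> I" and v: "v = z ^ p" by auto
      have "z = (\<Prod>i\<le>0. (phi p \<delta> ^^ i) ((\<lambda>_. z) i))" by simp
      then have "z \<in> {\<Prod>i\<le>0. (phi p \<delta> ^^ i) (x i) | x. \<forall>i\<le>0. x i \<in> I}"
        using z by (intro CollectI exI[of _ "\<lambda>_. z"] conjI) auto
      then have "z \<in> In p \<delta> I 0" unfolding In_def by (rule subsetD[OF ideal_gen_sub])
      moreover have "is_ideal (In p \<delta> I 0)" unfolding In_def by (rule ideal_gen_ideal)
      ultimately have "v \<in> In p \<delta> I 0" unfolding v
        using id_pow[of "In p \<delta> I 0" z p] p2 by simp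
      then show "v \<in> {v. \<exists>f\<in>In p \<delta> I 0. v - f \<in> K}" using id_zero[OF Kid]
        by (intro CollectI bexI[of _ v]) simp_all
    qed
  next
    case (Suc k)
    then have kn: "k \<le> n" by simp
    have IH: "G k \<subseteq> {v. \<exists>f\<in>In p \<delta> I k. v - f \<in> K}" using Suc kn by simp
    have Tid: "is_ideal {v. \<exists>f\<in>In p \<delta> I (Suc k). v - f \<in> K}"
      by (rule ideal_mod[OF _ Kid]) (unfold In_def, rule ideal_gen_ideal)
    show ?case unfolding G_def[of "Suc k"]
    proof (rule ideal_gen_least[OF Tid], rule subsetI)
      fix v0 assume "v0 \<in> (\<lambda>z. ((phi p \<delta> ^^ Suc k) z) ^ p) ` I"
      then obtain z where z: "z \<in> I" and v0: "v0 = ((phi p \<delta> ^^ Suc k) z) ^ p" by auto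
      define w where "w = (phi p \<delta> ^^ k) z"
      define v where "v = (phi p \<delta> ^^ Suc k) z"
      have vw: "v = w ^ p + of_nat p * \<delta> w" unfolding v_def w_def Fsuc ..
      obtain g where g: "g \<in> G k" and pg: "of_nat p - g \<in> K" using D[OF kn] by blast
      define h where "h = w ^ p + g * \<delta> w"
      have hG: "h \<in> G k" unfolding h_def w_def
        by (rule id_add[OF Gid Ggen[OF z] id_mult2[OF Gid g]])
      have "v - h = (of_nat p - g) * \<delta> w" unfolding vw h_def by (simp add: algebra_simps)
      then have "v - h \<in> K" using id_mult2[OF Kid pg] by simp
      then have vh: "v ^ (p - 1) - h ^ (p - 1) \<in> K" by (rule pow_diff_mem[OF Kid])
      have "h ^ (p - 1) \<in> G k" using id_pow[OF Gid hG] p2 by simp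
      then have "h ^ (p - 1) \<in> {v. \<exists>f\<in>In p \<delta> I k. v - f \<in> K}" by (rule subsetD[OF IH])
      then obtain f where f: "f \<in> In p \<delta> I k" and hf: "h ^ (p - 1) - f \<in> K" by blast
      have "v ^ (p - 1) - f \<in> K" using id_add[OF Kid vh hf] by simp
      then have "v * (v ^ (p - 1) - f) \<in> K" by (rule id_mult[OF Kid])
      moreover have "v * (v ^ (p - 1) - f) = v0 - f * v" unfolding v0 v_def[symmetric]
        by (subst (2) pSuc) (simp add: algebra_simps)
      moreover have "f * v \<in> In p \<delta> I (Suc k)" unfolding v_def by (rule In_step[OF z f])
      ultimately show "v0 \<in> {v. \<exists>f\<in>In p \<delta> I (Suc k). v - f \<in> K}"
        by (intro CollectI bexI[of _ "f * v"]) simp_all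
    qed
  qed
  obtain g where g: "g \<in> G n" and pg: "of_nat p - g \<in> K" using D[of n] by blast
  obtain f where f: "f \<in> In p \<delta> I n" and gf: "g - f \<in> K" using E[of n] g by blast
  have "of_nat p - f \<in> K" using id_add[OF Kid pg gf] by simp
  moreover have "\<forall>i\<le>n. (of_nat p - f) - of_nat p \<in> phiI p \<delta> I i"
  proof (intro allI impI)
    fix i assume "i \<le> n"
    then have "f \<in> phiI p \<delta> I i" using In_sub_phiI f by blast
    then have "- f \<in> phiI p \<delta> I i" using id_neg ideal_gen_ideal unfolding phiI_def by blast
    then show "(of_nat p - f) - of_nat p \<in> phiI p \<delta> I i" by simp
  qed
  ultimately show ?thesis unfolding K_def by blast
qed



lemma phiI_ideal: "is_ideal (phiI p \<delta> I i)"
  unfolding phiI_def by (rule ideal_gen_ideal)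

lemma phiI_shift: assumes "delta_ring p \<delta>" "x \<in> phiI p \<delta> I j"
  shows "phi p \<delta> x \<in> phiI p \<delta> I (Suc j)"
proof -
  have "phi p \<delta> x \<in> ideal_gen (phi p \<delta> ` ((phi p \<delta> ^^ j) ` I))"
    using rhom_ideal_gen[OF phi_rhom[OF assms(1)]] assms(2) unfolding phiI_def by blast
  moreover have "phi p \<delta> ` ((phi p \<delta> ^^ j) ` I) = (phi p \<delta> ^^ Suc j) ` I"
    by (simp add: image_comp)
  ultimately show ?thesis unfolding phiI_def by simp
qed

lemma Vstep_spec: assumes tp: "transversal_prism p \<delta> I"
  shows "(\<forall>i\<le>j. Vstep p \<delta> I j a - of_nat p * a \<in> phiI p \<delta> I i) \<and> Vstep p \<delta> I j a \<in> phiI p \<delta> I (Suc j)"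
proof -
  obtain e where e1: "e \<in> phiI p \<delta> I (Suc j)" and e2: "\<forall>i\<le>j. e - of_nat p \<in> phiI p \<delta> I i"
    using key_e[OF tp, of j] by blast
  have "(\<forall>i\<le>j. e * a - of_nat p * a \<in> phiI p \<delta> I i) \<and> e * a \<in> phiI p \<delta> I (Suc j)"
  proof (intro conjI allI impI)
    fix i assume "i \<le> j"
    then have "(e - of_nat p) * a \<in> phiI p \<delta> I i" using e2 id_mult2[OF phiI_ideal] by blast
    then show "e * a - of_nat p * a \<in> phiI p \<delta> I i" by (simp add: algebra_simps)
  next
    show "e * a \<in> phiI p \<delta> I (Suc j)" using id_mult2[OF phiI_ideal e1] .
  qed
  then show ?thesis unfolding Vstep_def by (rule someI)
qed

lemma Nstep_spec: assumes tp: "transversal_prism p \<delta> I"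
  shows "(\<forall>i\<le>j. Nstep p \<delta> I j a - a ^ p \<in> phiI p \<delta> I i) \<and> Nstep p \<delta> I j a - phi p \<delta> a \<in> phiI p \<delta> I (Suc j)"
proof -
  obtain e where e1: "e \<in> phiI p \<delta> I (Suc j)" and e2: "\<forall>i\<le>j. e - of_nat p \<in> phiI p \<delta> I i"
    using key_e[OF tp, of j] by blast
  have "(\<forall>i\<le>j. (phi p \<delta> a - e * \<delta> a) - a ^ p \<in> phiI p \<delta> I i) \<and>
        (phi p \<delta> a - e * \<delta> a) - phi p \<delta> a \<in> phiI p \<delta> I (Suc j)"
  proof (intro conjI allI impI)
    fix i assume "i \<le> j"
    then have "- ((e - of_nat p) * \<delta> a) \<in> phiI p \<delta> I i"
      using e2 id_mult2[OF phiI_ideal] id_neg[OF phiI_ideal] by blast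
    then show "(phi p \<delta> a - e * \<delta> a) - a ^ p \<in> phiI p \<delta> I i" by (simp add: algebra_simps phi_def)
  next
    have "- (e * \<delta> a) \<in> phiI p \<delta> I (Suc j)" using id_neg[OF phiI_ideal id_mult2[OF phiI_ideal e1]] .
    then show "(phi p \<delta> a - e * \<delta> a) - phi p \<delta> a \<in> phiI p \<delta> I (Suc j)" by simp
  qed
  then show ?thesis unfolding Nstep_def by (rule someI)
qed


lemma Ncomp_spec: assumes tp: "transversal_prism p \<delta> I"
  shows "(\<forall>i\<le>n. Ncomp p \<delta> I n d a - a ^ (p ^ d) \<in> phiI p \<delta> I i) \<and>
         (\<forall>k. 1 \<le> k \<and> k \<le> d \<longrightarrow> Ncomp p \<delta> I n d a - ((phi p \<delta> ^^ k) a) ^ (p ^ (d - k)) \<in> phiI p \<delta> I (n + k))"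
proof (induction d)
  case 0
  show ?case by (auto intro: id_zero[OF phiI_ideal])
next
  case (Suc d)
  have dr: "delta_ring p \<delta>" using tp by (simp add: transversal_prism_def prism_def)
  define N where "N = Ncomp p \<delta> I n d a"
  have N': "Ncomp p \<delta> I n (Suc d) a = Nstep p \<delta> I (n + d) N" by (simp add: N_def)
  have s1: "\<And>i. i \<le> n + d \<Longrightarrow> Nstep p \<delta> I (n + d) N - N ^ p \<in> phiI p \<delta> I i"
    and s2: "Nstep p \<delta> I (n + d) N - phi p \<delta> N \<in> phiI p \<delta> I (Suc (n + d))"
    using Nstep_spec[OF tp, of "n + d" N] by auto
  have IH1: "\<And>i. i \<le> n \<Longrightarrow> N - a ^ (p ^ d) \<in> phiI p \<delta> I i"
    and IH2: "\<And>k. 1 \<le> k \<Longrightarrow> k \<le> d \<Longrightarrow> N - ((phi p \<delta> ^^ k) a) ^ (p ^ (d - k)) \<in> phiI p \<delta> I (n + k)"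
    using Suc.IH unfolding N_def by auto
  show ?case
  proof (intro conjI allI impI)
    fix i assume i: "i \<le> n"
    have "N ^ p - (a ^ (p ^ d)) ^ p \<in> phiI p \<delta> I i" using pow_diff_mem[OF phiI_ideal IH1[OF i]] .
    moreover have "(a ^ (p ^ d)) ^ p = a ^ (p ^ Suc d)" by (simp add: power_mult[symmetric] mult.commute)
    ultimately have "N ^ p - a ^ (p ^ Suc d) \<in> phiI p \<delta> I i" by simp
    from id_add[OF phiI_ideal s1[of i] this] i
    show "Ncomp p \<delta> I n (Suc d) a - a ^ (p ^ Suc d) \<in> phiI p \<delta> I i" unfolding N' by simp
  next
    fix k assume k: "1 \<le> k \<and> k \<le> Suc d"
    show "Ncomp p \<delta> I n (Suc d) a - ((phi p \<delta> ^^ k) a) ^ (p ^ (Suc d - k)) \<in> phiI p \<delta> I (n + k)"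
    proof (cases "k \<le> d")
      case True
      have "N ^ p - (((phi p \<delta> ^^ k) a) ^ (p ^ (d - k))) ^ p \<in> phiI p \<delta> I (n + k)"
        using pow_diff_mem[OF phiI_ideal IH2] k True by blast
      moreover have "(((phi p \<delta> ^^ k) a) ^ (p ^ (d - k))) ^ p = ((phi p \<delta> ^^ k) a) ^ (p ^ (Suc d - k))"
        using True by (simp add: power_mult[symmetric] mult.commute Suc_diff_le)
      ultimately have "N ^ p - ((phi p \<delta> ^^ k) a) ^ (p ^ (Suc d - k)) \<in> phiI p \<delta> I (n + k)" by simp
      from id_add[OF phiI_ideal s1[of "n + k"] this] True
      show ?thesis unfolding N' by simp
    next
      case False
      then have kd: "k = Suc d" using k by simp
      have "N - (phi p \<delta> ^^ d) a \<in> phiI p \<delta> I (n + d)"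
      proof (cases "d = 0")
        case True then show ?thesis using id_zero[OF phiI_ideal] by (simp add: N_def)
      next
        case False then show ?thesis using IH2[of d] by simp
      qed
      then have "phi p \<delta> (N - (phi p \<delta> ^^ d) a) \<in> phiI p \<delta> I (Suc (n + d))" by (rule phiI_shift[OF dr])
      then have "phi p \<delta> N - (phi p \<delta> ^^ Suc d) a \<in> phiI p \<delta> I (Suc (n + d))"
        by (simp add: rhom_diff[OF phi_rhom[OF dr]])
      from id_add[OF phiI_ideal s2 this]
      show ?thesis unfolding N' kd by simp
    qed
  qed
qed

lemma Vcomp_spec: assumes tp: "transversal_prism p \<delta> I"
  shows "(\<forall>j\<le>L. Vcomp p \<delta> I L i b - of_nat p ^ i * b \<in> phiI p \<delta> I j) \<and>
         (\<forall>j. L < j \<and> j \<le> L + i \<longrightarrow> Vcomp p \<delta> I L i b \<in> phiI p \<delta> I j)"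
proof (induction i)
  case 0
  show ?case by (auto intro: id_zero[OF phiI_ideal])
next
  case (Suc i)
  define V where "V = Vcomp p \<delta> I L i b"
  have V': "Vcomp p \<delta> I L (Suc i) b = Vstep p \<delta> I (L + i) V" by (simp add: V_def)
  have s1: "\<And>j. j \<le> L + i \<Longrightarrow> Vstep p \<delta> I (L + i) V - of_nat p * V \<in> phiI p \<delta> I j"
    and s2: "Vstep p \<delta> I (L + i) V \<in> phiI p \<delta> I (Suc (L + i))"
    using Vstep_spec[OF tp, of "L + i" V] by auto
  have IH1: "\<And>j. j \<le> L \<Longrightarrow> V - of_nat p ^ i * b \<in> phiI p \<delta> I j"
    and IH2: "\<And>j. L < j \<Longrightarrow> j \<le> L + i \<Longrightarrow> V \<in> phiI p \<delta> I j"
    using Suc.IH unfolding V_def by auto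
  show ?case
  proof (intro conjI allI impI)
    fix j assume j: "j \<le> L"
    have "of_nat p * V - of_nat p * (of_nat p ^ i * b) \<in> phiI p \<delta> I j"
      by (rule mult_diff_mem[OF phiI_ideal IH1[OF j]])
    from id_add[OF phiI_ideal s1[of j] this] j
    show "Vcomp p \<delta> I L (Suc i) b - of_nat p ^ Suc i * b \<in> phiI p \<delta> I j" unfolding V' by (simp add: mult.assoc)
  next
    fix j assume j: "L < j \<and> j \<le> L + Suc i"
    show "Vcomp p \<delta> I L (Suc i) b \<in> phiI p \<delta> I j"
    proof (cases "j \<le> L + i")
      case True
      have "of_nat p * V \<in> phiI p \<delta> I j" using id_mult[OF phiI_ideal IH2] j True by blast
      from id_add[OF phiI_ideal s1[OF True] this] show ?thesis unfolding V' by simp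
    next
      case False
      then have "j = Suc (L + i)" using j by simp
      then show ?thesis unfolding V' using s2 by simp
    qed
  qed
qed


theorem lemma4p2:
  fixes p :: nat and \<delta> :: "'a::comm_ring_1 \<Rightarrow> 'a" and I :: "'a set"
    and m n :: nat and a :: "nat \<Rightarrow> 'a"
  assumes "transversal_prism p \<delta> I"
  shows "(\<forall>j\<le>n. cmap p \<delta> I m n a - ghost p a m \<in> phiI p \<delta> I j) \<and>
         (\<forall>k\<in>{1..m}. cmap p \<delta> I m n a - (phi p \<delta> ^^ k) (ghost p a (m - k)) \<in> phiI p \<delta> I (n + k))"
proof (intro conjI allI impI ballI)
  note tp = assms
  have dr: "delta_ring p \<delta>" using tp by (simp add: transversal_prism_def prism_def)
  define T where "T i = Vcomp p \<delta> I (m + n - i) i (Ncomp p \<delta> I n (m - i) (a i))" for i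
  have cm: "cmap p \<delta> I m n a = (\<Sum>i\<le>m. T i)" unfolding cmap_def T_def ..
  fix j assume j: "j \<le> n"
  have "T i - of_nat p ^ i * a i ^ (p ^ (m - i)) \<in> phiI p \<delta> I j" if i: "i \<le> m" for i
  proof -
    define N where "N = Ncomp p \<delta> I n (m - i) (a i)"
    have "T i - of_nat p ^ i * N \<in> phiI p \<delta> I j"
      using Vcomp_spec[OF tp, of "m + n - i" i N] i j unfolding T_def N_def by auto
    moreover have "of_nat p ^ i * N - of_nat p ^ i * a i ^ (p ^ (m - i)) \<in> phiI p \<delta> I j"
      using Ncomp_spec[OF tp, of n "m - i" "a i"] j unfolding N_def by (intro mult_diff_mem[OF phiI_ideal]) auto
    ultimately show ?thesis using id_add[OF phiI_ideal] by fastforce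
  qed
  then have "(\<Sum>i\<le>m. T i) - (\<Sum>i\<le>m. of_nat p ^ i * a i ^ (p ^ (m - i))) \<in> phiI p \<delta> I j"
    by (intro sum_diff_mem[OF phiI_ideal]) auto
  then show "cmap p \<delta> I m n a - ghost p a m \<in> phiI p \<delta> I j" unfolding cm ghost_def .
next
  note tp = assms
  have dr: "delta_ring p \<delta>" using tp by (simp add: transversal_prism_def prism_def)
  have rhk: "rhom (phi p \<delta> ^^ k)" for k by (rule rhom_funpow[OF phi_rhom[OF dr]])
  define T where "T i = Vcomp p \<delta> I (m + n - i) i (Ncomp p \<delta> I n (m - i) (a i))" for i
  have cm: "cmap p \<delta> I m n a = (\<Sum>i\<le>m. T i)" unfolding cmap_def T_def ..
  fix k assume k: "k \<in> {1..m}"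
  define U where "U i = (if i \<le> m - k then of_nat p ^ i * ((phi p \<delta> ^^ k) (a i)) ^ (p ^ (m - k - i)) else 0)" for i
  have "T i - U i \<in> phiI p \<delta> I (n + k)" if i: "i \<le> m" for i
  proof (cases "i \<le> m - k")
    case True
    define N where "N = Ncomp p \<delta> I n (m - i) (a i)"
    have "T i - of_nat p ^ i * N \<in> phiI p \<delta> I (n + k)"
      using Vcomp_spec[OF tp, of "m + n - i" i N] i k True unfolding T_def N_def by auto
    moreover have "N - ((phi p \<delta> ^^ k) (a i)) ^ (p ^ (m - i - k)) \<in> phiI p \<delta> I (n + k)"
      using Ncomp_spec[OF tp, of n "m - i" "a i"] k True unfolding N_def by auto
    then have "of_nat p ^ i * N - of_nat p ^ i * ((phi p \<delta> ^^ k) (a i)) ^ (p ^ (m - k - i)) \<in> phiI p \<delta> I (n + k)"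
    proof -
      have e: "m - i - k = m - k - i" by simp
      show ?thesis by (rule mult_diff_mem[OF phiI_ideal]) (use \<open>N - _ \<in> _\<close> e in simp)
    qed
    ultimately show ?thesis using id_add[OF phiI_ideal] True unfolding U_def by fastforce
  next
    case False
    then have "T i \<in> phiI p \<delta> I (n + k)"
      using Vcomp_spec[OF tp, of "m + n - i" i "Ncomp p \<delta> I n (m - i) (a i)"] i k unfolding T_def by auto
    then show ?thesis using False unfolding U_def by simp
  qed
  then have "(\<Sum>i\<le>m. T i) - (\<Sum>i\<le>m. U i) \<in> phiI p \<delta> I (n + k)"
    by (intro sum_diff_mem[OF phiI_ideal]) auto
  moreover have "(\<Sum>i\<le>m. U i) = (phi p \<delta> ^^ k) (ghost p a (m - k))"
  proof -
    have "(\<Sum>i\<le>m. U i) = (\<Sum>i\<in>{i \<in> {..m}. i \<le> m - k}. of_nat p ^ i * ((phi p \<delta> ^^ k) (a i)) ^ (p ^ (m - k - i)))"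
      unfolding U_def by (rule sum.inter_filter[OF finite_atMost, symmetric])
    also have "{i \<in> {..m}. i \<le> m - k} = {..m - k}" by auto
    finally show ?thesis unfolding ghost_def
      by (simp add: rhom_sum[OF rhk] rhom_mult[OF rhk] rhom_pow[OF rhk] rhom_of_nat[OF rhk])
  qed
  ultimately show "cmap p \<delta> I m n a - (phi p \<delta> ^^ k) (ghost p a (m - k)) \<in> phiI p \<delta> I (n + k)"
    unfolding cm by simp
qed


end
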